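(* Let $H$ be a finite simple connected graph such that $\mathscr{C}(H)$ is an accessible set system. Let $n,\ell$ be integers with $n\geq 2$ and $1\leq \ell<n$, and let $G:=K_n\circ_\ell H$. Then $\mathscr{C}(G)$ is an accessible set system.
   Context: For a graph $\Gamma$ and $A\subseteq V(\Gamma)$, $\omega(\Gamma\setminus A)$ is the number of connected components of the induced subgraph on $V(\Gamma)\setminus A$. A subset $T\subseteq V(\Gamma)$ is a cutset if $T=\emptyset$ or, for every $v\in T$, $\omega(\Gamma\setminus (T\setminus\{v\}))<\omega(\Gamma\setminus T)$; $\mathscr{C}(\Gamma)$ is the set of cutsets. $\mathscr{C}(\Gamma)$ is an accessible set system if for every non-empty $T\in\mathscr{C}(\Gamma)$ there is $t\in T$ with $T\setminus\{t\}\in\mathscr{C}(\Gamma)$. $K_n$ is the complete graph on $n$ vertices. For a subset $L\subseteq V(K_n)$ with $|L|=\ell$, $K_n\circ_\ell H$ denotes the graph obtained from $K_n$ by taking, for each $v\in L$, a disjoint copy $H_v$ of $H$ and joining $v$ to every vertex of $H_v$ (up to isomorphism this does not depend on the choice of $L$). *)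

theory Defs
  imports Main
begin

definition simple_graph :: "'a set \<Rightarrow> 'a set set \<Rightarrow> bool" where
  "simple_graph V E \<longleftrightarrow> finite V \<and>
     (\<forall>e\<in>E. \<exists>u v. e = {u, v} \<and> u \<noteq> v \<and> u \<in> V \<and> v \<in> V)"

definition conn_rel :: "'a set set \<Rightarrow> 'a set \<Rightarrow> ('a \<times> 'a) set" where
  "conn_rel E S = ({(x, y). x \<in> S \<and> y \<in> S \<and> {x, y} \<in> E})\<^sup>* \<inter> (S \<times> S)"

definition num_comp :: "'a set \<Rightarrow> 'a set set \<Rightarrow> 'a set \<Rightarrow> nat" where
  "num_comp V E A = card ((V - A) // conn_rel E (V - A))"

definition connected_graph :: "'a set \<Rightarrow> 'a set set \<Rightarrow> bool" where
  "connected_graph V E \<longleftrightarrow> V \<noteq> {} \<and> num_comp V E {} = 1"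

definition is_cutset :: "'a set \<Rightarrow> 'a set set \<Rightarrow> 'a set \<Rightarrow> bool" where
  "is_cutset V E T \<longleftrightarrow> T \<subseteq> V \<and>
     (T = {} \<or> (\<forall>v\<in>T. num_comp V E (T - {v}) < num_comp V E T))"

definition cutsets :: "'a set \<Rightarrow> 'a set set \<Rightarrow> 'a set set" where
  "cutsets V E = {T. is_cutset V E T}"

definition accessible :: "'a set set \<Rightarrow> bool" where
  "accessible F \<longleftrightarrow> (\<forall>T\<in>F. T \<noteq> {} \<longrightarrow> (\<exists>t\<in>T. T - {t} \<in> F))"

text \<open>K_n \<circ>_l H with L = {0..<l}: vertices Inl i (i < n) of K_n, and
Inr (i, x) for the copy H_i of H attached to i < l.\<close>

definition corona_V :: "nat \<Rightarrow> nat \<Rightarrow> 'a set \<Rightarrow> (nat + nat \<times> 'a) set" where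
  "corona_V n l VH = Inl ` {0..<n} \<union> Inr ` ({0..<l} \<times> VH)"

definition corona_E :: "nat \<Rightarrow> nat \<Rightarrow> 'a set \<Rightarrow> 'a set set \<Rightarrow> (nat + nat \<times> 'a) set set" where
  "corona_E n l VH EH =
     {{Inl i, Inl j} | i j. i < n \<and> j < n \<and> i \<noteq> j}
   \<union> {{Inr (i, x), Inr (i, y)} | i x y. i < l \<and> {x, y} \<in> EH}
   \<union> {{Inl i, Inr (i, x)} | i x. i < l \<and> x \<in> VH}"

end

theory Submission
  imports Defs
begin

definition st :: "'a set set \<Rightarrow> 'a set \<Rightarrow> ('a \<times> 'a) set" where
  "st E S = {(x, y). x \<in> S \<and> y \<in> S \<and> {x, y} \<in> E}"

lemma conn_rel_st: "conn_rel E S = (st E S)\<^sup>* \<inter> (S \<times> S)"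
  by (simp add: conn_rel_def st_def)

lemma sym_st: "sym (st E S)"
  unfolding sym_def st_def by (auto simp: insert_commute)

lemma conn_sym: "(x, y) \<in> conn_rel E S \<Longrightarrow> (y, x) \<in> conn_rel E S"
  using sym_rtrancl[OF sym_st, of E S] unfolding conn_rel_st sym_def by auto

lemma conn_trans: "(x, y) \<in> conn_rel E S \<Longrightarrow> (y, z) \<in> conn_rel E S \<Longrightarrow> (x, z) \<in> conn_rel E S"
  unfolding conn_rel_st by (auto intro: rtrancl_trans)

lemma conn_refl: "x \<in> S \<Longrightarrow> (x, x) \<in> conn_rel E S"
  unfolding conn_rel_st by auto

lemma conn_edge: "x \<in> S \<Longrightarrow> y \<in> S \<Longrightarrow> {x, y} \<in> E \<Longrightarrow> (x, y) \<in> conn_rel E S"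
  unfolding conn_rel_st by (auto simp: st_def)

lemma conn_in: "(x, y) \<in> conn_rel E S \<Longrightarrow> x \<in> S \<and> y \<in> S"
  unfolding conn_rel_st by auto

lemma st_mono: "S \<subseteq> S' \<Longrightarrow> st E S \<subseteq> st E S'"
  unfolding st_def by auto

lemma conn_mono: "S \<subseteq> S' \<Longrightarrow> (x, y) \<in> conn_rel E S \<Longrightarrow> (x, y) \<in> conn_rel E S'"
  unfolding conn_rel_st using rtrancl_mono[OF st_mono] by blast

lemma equiv_conn: "equiv S (conn_rel E S)"
proof (rule equivI)
  show "conn_rel E S \<subseteq> S \<times> S" using conn_in by fast
  show "refl_on S (conn_rel E S)" by (auto intro!: refl_onI conn_refl dest: conn_in)
  show "sym (conn_rel E S)" by (auto intro!: symI conn_sym)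
  show "trans (conn_rel E S)" by (auto intro!: transI elim: conn_trans)
qed

lemma conn_insert:
  fixes E :: "'a set set" and S :: "'a set"
  assumes "v \<notin> S"
  defines "R \<equiv> conn_rel E S" and "C \<equiv> insert v (conn_rel E S `` {a \<in> S. {v, a} \<in> E})"
  shows "conn_rel E (insert v S) = R \<union> C \<times> C"
proof
  let ?N = "{a \<in> S. {v, a} \<in> E}"
  have Cdef: "C = insert v (R `` ?N)" using C_def R_def by simp
  have Rin: "(x, y) \<in> R \<Longrightarrow> x \<in> S \<and> y \<in> S" for x y using conn_in R_def by metis
  have Rs: "(x, y) \<in> R \<Longrightarrow> (y, x) \<in> R" for x y using conn_sym R_def by metis
  have Rt: "(x, y) \<in> R \<Longrightarrow> (y, z) \<in> R \<Longrightarrow> (x, z) \<in> R" for x y z using conn_trans R_def by metis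
  have Rr: "x \<in> S \<Longrightarrow> (x, x) \<in> R" for x using conn_refl R_def by metis
  have Re: "x \<in> S \<Longrightarrow> y \<in> S \<Longrightarrow> {x, y} \<in> E \<Longrightarrow> (x, y) \<in> R" for x y using conn_edge R_def by metis
  have closed: "y \<in> C \<Longrightarrow> (y, z) \<in> R \<Longrightarrow> z \<in> C" for y z
    using Rin Rt assms(1) unfolding Cdef by blast
  have closed2: "z \<in> C \<Longrightarrow> (y, z) \<in> R \<Longrightarrow> y \<in> C" for y z
    using closed Rs by blast
  show "conn_rel E (insert v S) \<subseteq> R \<union> C \<times> C"
  proof clarify
    fix x z assume xz: "(x, z) \<in> conn_rel E (insert v S)" and nR: "(x, z) \<notin> R"
    have "(x, z) \<in> (st E (insert v S))\<^sup>*" and x: "x \<in> insert v S" using xz unfolding conn_rel_st by auto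
    then have "(x, z) \<in> R \<union> C \<times> C"
    proof (induction z rule: rtrancl_induct)
      case base
      then show ?case using Rr Cdef by auto
    next
      case (step y z)
      have y: "y \<in> insert v S" and z: "z \<in> insert v S" and yz: "{y, z} \<in> E"
        using step.hyps(2) unfolding st_def by auto
      show ?case
      proof (cases "y = v")
        case True
        then have "x \<in> C" using step.IH x Rin assms(1) by auto
        moreover have "z \<in> C" using True z yz unfolding Cdef using Rr by auto
        ultimately show ?thesis by auto
      next
        case yv: False
        show ?thesis
        proof (cases "z = v")
          case True
          then have "{v, y} \<in> E" using yz by (simp add: insert_commute)
          then have "y \<in> C" using yv y Rr unfolding Cdef by blast
          then have "x \<in> C" using step.IH x closed2 by blast
          then show ?thesis using True Cdef by auto
        next
          case False
          then have "(y, z) \<in> R" using yv y z yz Re by auto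
          then show ?thesis using step.IH x Rt closed by blast
        qed
      qed
    qed
    with nR show "x \<in> C \<and> z \<in> C" by auto
  qed
  show "R \<union> C \<times> C \<subseteq> conn_rel E (insert v S)"
  proof -
    have "R \<subseteq> conn_rel E (insert v S)" using conn_mono[of S "insert v S"] R_def by auto
    moreover have vc: "(v, c) \<in> conn_rel E (insert v S)" if cC: "c \<in> C" for c
    proof (cases "c = v")
      case True then show ?thesis by (simp add: conn_refl)
    next
      case False
      then obtain a where a: "a \<in> S" "{v, a} \<in> E" "(a, c) \<in> R" using cC False unfolding Cdef by blast
      have "(v, a) \<in> conn_rel E (insert v S)" using a by (intro conn_edge) auto
      moreover have "(a, c) \<in> conn_rel E (insert v S)" using a(3) conn_mono[of S "insert v S"] R_def by auto
      ultimately show ?thesis by (rule conn_trans)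
    qed
    moreover have "(a, b) \<in> conn_rel E (insert v S)" if "a \<in> C" "b \<in> C" for a b
      using conn_trans[OF conn_sym[OF vc[OF that(1)]] vc[OF that(2)]] .
    ultimately show ?thesis by auto
  qed
qed

lemma card_img_ge2:
  assumes "finite A"
  shows "2 \<le> card (f ` A) \<longleftrightarrow> (\<exists>a\<in>A. \<exists>b\<in>A. f a \<noteq> f b)"
proof
  assume "2 \<le> card (f ` A)"
  then obtain X Y where "X \<in> f ` A" "Y \<in> f ` A" "X \<noteq> Y"
    by (metis One_nat_def card.empty card_le_Suc0_iff_eq finite_imageI assms not_less_eq_eq numeral_2_eq_2 le_zero_eq zero_neq_numeral)
  then show "\<exists>a\<in>A. \<exists>b\<in>A. f a \<noteq> f b" by auto
next
  assume "\<exists>a\<in>A. \<exists>b\<in>A. f a \<noteq> f b"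
  then obtain a b where ab: "a \<in> A" "b \<in> A" "f a \<noteq> f b" by auto
  then have "card {f a, f b} \<le> card (f ` A)" by (intro card_mono) (auto simp: assms)
  then show "2 \<le> card (f ` A)" using ab(3) by simp
qed

lemma count_insert:
  fixes E :: "'a set set" and S :: "'a set"
  assumes fin: "finite S" and vS: "v \<notin> S"
  shows "card (insert v S // conn_rel E (insert v S)) < card (S // conn_rel E S) \<longleftrightarrow>
    (\<exists>a\<in>S. \<exists>b\<in>S. {v, a} \<in> E \<and> {v, b} \<in> E \<and> (a, b) \<notin> conn_rel E S)"
proof -
  define R where "R = conn_rel E S"
  define N where "N = {a \<in> S. {v, a} \<in> E}"
  define NC where "NC = R `` N"
  define C where "C = insert v NC"
  have R': "conn_rel E (insert v S) = R \<union> C \<times> C"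
    using conn_insert[OF vS, of E] unfolding R_def C_def NC_def N_def by simp
  have eqv: "equiv S R" unfolding R_def by (rule equiv_conn)
  have Rin: "(x, y) \<in> R \<Longrightarrow> x \<in> S \<and> y \<in> S" for x y using conn_in R_def by metis
  have Rs: "(x, y) \<in> R \<Longrightarrow> (y, x) \<in> R" for x y using conn_sym R_def by metis
  have Rt: "(x, y) \<in> R \<Longrightarrow> (y, z) \<in> R \<Longrightarrow> (x, z) \<in> R" for x y z using conn_trans R_def by metis
  have Rr: "x \<in> S \<Longrightarrow> (x, x) \<in> R" for x using conn_refl R_def by metis
  have NCS: "NC \<subseteq> S" using Rin unfolding NC_def by blast
  have NNC: "N \<subseteq> NC" using Rr unfolding NC_def N_def by blast
  have clsC: "R `` {x} \<subseteq> C" if "x \<in> C" for x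
  proof (cases "x = v")
    case True then show ?thesis using Rin vS by auto
  next
    case False
    then have "x \<in> NC" using that C_def by auto
    then show ?thesis unfolding C_def NC_def using Rt by blast
  qed
  have cls: "conn_rel E (insert v S) `` {x} = (if x \<in> C then C else R `` {x})" for x
    using clsC[of x] unfolding R' by auto
  have q1: "insert v S // conn_rel E (insert v S) = insert C ((\<lambda>x. R `` {x}) ` (S - NC))"
  proof -
    have "insert v S // conn_rel E (insert v S) = (\<lambda>x. conn_rel E (insert v S) `` {x}) ` insert v S"
      unfolding quotient_def by auto
    also have "\<dots> = insert C ((\<lambda>x. R `` {x}) ` (S - NC))"
      unfolding cls C_def using vS by auto
    finally show ?thesis .
  qed
  have q2: "S // R = (\<lambda>x. R `` {x}) ` NC \<union> (\<lambda>x. R `` {x}) ` (S - NC)"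
    unfolding quotient_def using NCS by auto
  have disj: "(\<lambda>x. R `` {x}) ` NC \<inter> (\<lambda>x. R `` {x}) ` (S - NC) = {}"
  proof (rule ccontr)
    assume "\<not> ?thesis"
    then obtain x y where "x \<in> NC" "y \<in> S - NC" "R `` {x} = R `` {y}" by blast
    then have "(x, y) \<in> R" using eq_equiv_class_iff[OF eqv] NCS by blast
    with \<open>x \<in> NC\<close> \<open>y \<in> S - NC\<close> show False unfolding NC_def using Rt by blast
  qed
  have Cn: "C \<notin> (\<lambda>x. R `` {x}) ` (S - NC)" using Rin vS unfolding C_def by blast
  have img: "(\<lambda>x. R `` {x}) ` NC = (\<lambda>x. R `` {x}) ` N"
  proof
    show "(\<lambda>x. R `` {x}) ` N \<subseteq> (\<lambda>x. R `` {x}) ` NC" using NNC by auto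
    show "(\<lambda>x. R `` {x}) ` NC \<subseteq> (\<lambda>x. R `` {x}) ` N"
    proof
      fix X assume "X \<in> (\<lambda>x. R `` {x}) ` NC"
      then obtain c where c: "c \<in> NC" "X = R `` {c}" by auto
      then obtain a where a: "a \<in> N" "(a, c) \<in> R" unfolding NC_def by auto
      then have "R `` {a} = R `` {c}" using eq_equiv_class_iff[OF eqv] Rin by blast
      then show "X \<in> (\<lambda>x. R `` {x}) ` N" using a c by auto
    qed
  qed
  have finNC: "finite NC" using NCS fin finite_subset by auto
  have finN: "finite N" using NNC finNC finite_subset by auto
  have c1: "card (insert v S // conn_rel E (insert v S)) = Suc (card ((\<lambda>x. R `` {x}) ` (S - NC)))"
    unfolding q1 using Cn fin by simp
  have c2: "card (S // conn_rel E S) = card ((\<lambda>x. R `` {x}) ` N) + card ((\<lambda>x. R `` {x}) ` (S - NC))"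
    unfolding R_def[symmetric] q2 img[symmetric] using disj finNC fin by (simp add: card_Un_disjoint)
  have "card (insert v S // conn_rel E (insert v S)) < card (S // conn_rel E S) \<longleftrightarrow>
     2 \<le> card ((\<lambda>x. R `` {x}) ` N)" unfolding c1 c2 by linarith
  also have "\<dots> \<longleftrightarrow> (\<exists>a\<in>N. \<exists>b\<in>N. R `` {a} \<noteq> R `` {b})" by (rule card_img_ge2[OF finN])
  also have "\<dots> \<longleftrightarrow> (\<exists>a\<in>N. \<exists>b\<in>N. (a, b) \<notin> R)"
    using eq_equiv_class_iff[OF eqv] N_def by auto
  finally show ?thesis unfolding N_def R_def by auto
qed

definition good :: "'a set \<Rightarrow> 'a set set \<Rightarrow> 'a set \<Rightarrow> 'a \<Rightarrow> bool" where
  "good V E T v \<longleftrightarrow> (\<exists>a\<in>V - T. \<exists>b\<in>V - T. {v, a} \<in> E \<and> {v, b} \<in> E \<and> (a, b) \<notin> conn_rel E (V - T))"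

lemma cutset_char:
  assumes "finite V"
  shows "is_cutset V E T \<longleftrightarrow> T \<subseteq> V \<and> (\<forall>v\<in>T. good V E T v)"
proof -
  have "num_comp V E (T - {v}) < num_comp V E T \<longleftrightarrow> good V E T v" if "T \<subseteq> V" "v \<in> T" for v
  proof -
    have "V - (T - {v}) = insert v (V - T)" using that by auto
    moreover have "v \<notin> V - T" using that by auto
    ultimately show ?thesis unfolding num_comp_def good_def
      using count_insert[of "V - T" v E] assms by simp
  qed
  then show ?thesis unfolding is_cutset_def by auto
qed


lemma E_LL: "{Inl i, Inl j} \<in> corona_E n l VH EH \<longleftrightarrow> i < n \<and> j < n \<and> i \<noteq> j"
  unfolding corona_E_def by (auto simp: doubleton_eq_iff)

lemma E_LR: "{Inl i, Inr (k, y)} \<in> corona_E n l VH EH \<longleftrightarrow> k = i \<and> i < l \<and> y \<in> VH"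
  unfolding corona_E_def by (auto simp: doubleton_eq_iff)

lemma E_RL: "{Inr (k, y), Inl i} \<in> corona_E n l VH EH \<longleftrightarrow> k = i \<and> i < l \<and> y \<in> VH"
  by (simp add: insert_commute E_LR)

lemma E_RR: "{Inr (i, x), Inr (k, y)} \<in> corona_E n l VH EH \<longleftrightarrow> k = i \<and> i < l \<and> {x, y} \<in> EH"
  unfolding corona_E_def by (auto simp: doubleton_eq_iff insert_commute)

lemma V_L: "Inl i \<in> corona_V n l VH \<longleftrightarrow> i < n"
  unfolding corona_V_def by auto

lemma V_R: "Inr (i, x) \<in> corona_V n l VH \<longleftrightarrow> i < l \<and> x \<in> VH"
  unfolding corona_V_def by auto

lemmas EV = E_LL E_LR E_RL E_RR V_L V_R

lemma fwd:
  assumes "Inl j \<in> T"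
    and "(p, w) \<in> (st (corona_E n l VH EH) (corona_V n l VH - T))\<^sup>*" and "p = Inr (j, a)"
  shows "\<exists>b. w = Inr (j, b) \<and> (a, b) \<in> (st EH (VH - {x. Inr (j, x) \<in> T}))\<^sup>*"
  using assms(2)
proof (induction w rule: rtrancl_induct)
  case base then show ?case using assms(3) by auto
next
  case (step y z)
  then obtain b where b: "y = Inr (j, b)" "(a, b) \<in> (st EH (VH - {x. Inr (j, x) \<in> T}))\<^sup>*" by auto
  have yz: "y \<in> corona_V n l VH - T" "z \<in> corona_V n l VH - T" "{y, z} \<in> corona_E n l VH EH"
    using step.hyps(2) unfolding st_def by auto
  show ?case
  proof (cases z)
    case (Inl i)
    then show ?thesis using yz b assms(1) by (auto simp: EV)
  next
    case (Inr q)
    then obtain k c where kc: "z = Inr (k, c)" by (cases q) auto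
    then have "k = j" "{b, c} \<in> EH" "b \<in> VH - {x. Inr (j, x) \<in> T}" "c \<in> VH - {x. Inr (j, x) \<in> T}"
      using yz b by (auto simp: EV)
    then have "(b, c) \<in> st EH (VH - {x. Inr (j, x) \<in> T})" unfolding st_def by auto
    then show ?thesis using b kc \<open>k = j\<close> by auto
  qed
qed

lemma fwd_conn:
  assumes "Inl j \<in> T"
    and "(Inr (j, a), w) \<in> conn_rel (corona_E n l VH EH) (corona_V n l VH - T)"
  shows "\<exists>b. w = Inr (j, b) \<and> (a, b) \<in> conn_rel EH (VH - {x. Inr (j, x) \<in> T})"
proof -
  obtain b where b: "w = Inr (j, b)" "(a, b) \<in> (st EH (VH - {x. Inr (j, x) \<in> T}))\<^sup>*"
    using fwd[OF assms(1), of "Inr (j, a)" w n l VH EH a] assms(2) unfolding conn_rel_st by auto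
  moreover have "Inr (j, a) \<in> corona_V n l VH - T" "w \<in> corona_V n l VH - T"
    using assms(2) conn_in by fast+
  ultimately show ?thesis unfolding conn_rel_st by (auto simp: EV)
qed

lemma bwd:
  assumes "j < l" and "(a, b) \<in> conn_rel EH (VH - {x. Inr (j, x) \<in> T})"
  shows "(Inr (j, a), Inr (j, b)) \<in> conn_rel (corona_E n l VH EH) (corona_V n l VH - T)"
proof -
  have "(a, b) \<in> (st EH (VH - {x. Inr (j, x) \<in> T}))\<^sup>*" using assms(2) unfolding conn_rel_st by auto
  then have "(Inr (j, a), Inr (j, b)) \<in> (st (corona_E n l VH EH) (corona_V n l VH - T))\<^sup>*"
  proof (induction b rule: rtrancl_induct)
    case base then show ?case by simp
  next
    case (step y z)
    then have "(Inr (j, y), Inr (j, z)) \<in> st (corona_E n l VH EH) (corona_V n l VH - T)"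
      using assms(1) unfolding st_def by (auto simp: EV)
    then show ?case using step.IH by auto
  qed
  moreover have "a \<in> VH - {x. Inr (j, x) \<in> T}" "b \<in> VH - {x. Inr (j, x) \<in> T}"
    using assms(2) conn_in by fast+
  ultimately show ?thesis unfolding conn_rel_st using assms(1) by (auto simp: EV)
qed

lemma inl_good:
  assumes "Inl j \<in> T" "j < l" "y \<in> VH" "Inr (j, y) \<notin> T" "Inl m \<notin> T" "l \<le> m" "m < n"
  shows "good (corona_V n l VH) (corona_E n l VH EH) T (Inl j)"
proof -
  have "Inr (j, y) \<in> corona_V n l VH - T" "Inl m \<in> corona_V n l VH - T" using assms by (auto simp: EV)
  moreover have "{Inl j, Inr (j, y)} \<in> corona_E n l VH EH" "{Inl j, Inl m} \<in> corona_E n l VH EH"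
    using assms by (auto simp: EV)
  moreover have "(Inr (j, y), Inl m) \<notin> conn_rel (corona_E n l VH EH) (corona_V n l VH - T)"
    using fwd_conn[OF assms(1)] by blast
  ultimately show ?thesis unfolding good_def by blast
qed

lemma inr_good:
  assumes "Inl j \<in> T" "j < l" "good VH EH {x. Inr (j, x) \<in> T} x"
  shows "good (corona_V n l VH) (corona_E n l VH EH) T (Inr (j, x))"
proof -
  obtain a b where ab: "a \<in> VH - {x. Inr (j, x) \<in> T}" "b \<in> VH - {x. Inr (j, x) \<in> T}"
    "{x, a} \<in> EH" "{x, b} \<in> EH" "(a, b) \<notin> conn_rel EH (VH - {x. Inr (j, x) \<in> T})"
    using assms(3) unfolding good_def by blast
  have "Inr (j, a) \<in> corona_V n l VH - T" "Inr (j, b) \<in> corona_V n l VH - T" using ab assms by (auto simp: EV)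
  moreover have "{Inr (j, x), Inr (j, a)} \<in> corona_E n l VH EH" "{Inr (j, x), Inr (j, b)} \<in> corona_E n l VH EH"
    using ab assms by (auto simp: EV)
  moreover have "(Inr (j, a), Inr (j, b)) \<notin> conn_rel (corona_E n l VH EH) (corona_V n l VH - T)"
    using fwd_conn[OF assms(1), where a=a and w="Inr (j, b)"] ab(5) by auto
  ultimately show ?thesis unfolding good_def by blast
qed

lemma nec_L:
  assumes "good (corona_V n l VH) (corona_E n l VH EH) T (Inl j)"
  shows "j < l \<and> (\<exists>y\<in>VH. Inr (j, y) \<notin> T)"
proof (rule ccontr)
  assume H: "\<not> ?thesis"
  obtain a b where ab: "a \<in> corona_V n l VH - T" "b \<in> corona_V n l VH - T"
    "{Inl j, a} \<in> corona_E n l VH EH" "{Inl j, b} \<in> corona_E n l VH EH"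
    "(a, b) \<notin> conn_rel (corona_E n l VH EH) (corona_V n l VH - T)"
    using assms unfolding good_def by blast
  have isL: "\<exists>k. w = Inl k \<and> k < n" if "w \<in> corona_V n l VH - T" "{Inl j, w} \<in> corona_E n l VH EH" for w
  proof (cases w)
    case (Inl k) then show ?thesis using that by (auto simp: EV)
  next
    case (Inr q)
    then obtain k c where "w = Inr (k, c)" by (cases q) auto
    then show ?thesis using that H by (auto simp: EV)
  qed
  obtain ka kb where "a = Inl ka" "b = Inl kb" "ka < n" "kb < n" using isL ab by blast
  then have "(a, b) \<in> conn_rel (corona_E n l VH EH) (corona_V n l VH - T)"
    using ab(1,2) by (cases "ka = kb") (auto intro: conn_refl conn_edge simp: EV)
  with ab(5) show False by blast
qed

lemma nec_R:
  assumes "good (corona_V n l VH) (corona_E n l VH EH) T (Inr (i, x))" and "l \<le> n"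
  shows "Inl i \<in> T \<and> good VH EH {x. Inr (i, x) \<in> T} x"
proof -
  obtain a b where ab: "a \<in> corona_V n l VH - T" "b \<in> corona_V n l VH - T"
    "{Inr (i, x), a} \<in> corona_E n l VH EH" "{Inr (i, x), b} \<in> corona_E n l VH EH"
    "(a, b) \<notin> conn_rel (corona_E n l VH EH) (corona_V n l VH - T)"
    using assms unfolding good_def by blast
  have nb: "(w = Inl i \<and> i < l) \<or> (\<exists>c. w = Inr (i, c) \<and> i < l \<and> {x, c} \<in> EH \<and> c \<in> VH)"
    if "w \<in> corona_V n l VH - T" "{Inr (i, x), w} \<in> corona_E n l VH EH" for w
  proof (cases w)
    case (Inl k) then show ?thesis using that by (auto simp: EV)
  next
    case (Inr q)
    then obtain k c where "w = Inr (k, c)" by (cases q) auto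
    then show ?thesis using that by (auto simp: EV)
  qed
  have il: "i < l" using nb[OF ab(1,3)] by auto
  have LT: "Inl i \<in> T"
  proof (rule ccontr)
    assume "Inl i \<notin> T"
    then have Li: "Inl i \<in> corona_V n l VH - T" using il assms(2) by (auto simp: EV)
    have cw: "(w, Inl i) \<in> conn_rel (corona_E n l VH EH) (corona_V n l VH - T)"
      if "w \<in> corona_V n l VH - T" "{Inr (i, x), w} \<in> corona_E n l VH EH" for w
    proof -
      from nb[OF that] show ?thesis
      proof
        assume "w = Inl i \<and> i < l" then show ?thesis using Li by (auto intro: conn_refl)
      next
        assume "\<exists>c. w = Inr (i, c) \<and> i < l \<and> {x, c} \<in> EH \<and> c \<in> VH"
        then obtain c where c: "w = Inr (i, c)" "c \<in> VH" by auto
        show ?thesis using c Li that(1) il by (auto intro!: conn_edge simp: EV)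
      qed
    qed
    have "(a, b) \<in> conn_rel (corona_E n l VH EH) (corona_V n l VH - T)"
      using conn_trans[OF cw[OF ab(1,3)] conn_sym[OF cw[OF ab(2,4)]]] .
    with ab(5) show False by blast
  qed
  have gd: "\<exists>c. w = Inr (i, c) \<and> {x, c} \<in> EH \<and> c \<in> VH - {x. Inr (i, x) \<in> T}"
    if "w \<in> corona_V n l VH - T" "{Inr (i, x), w} \<in> corona_E n l VH EH" for w
    using nb[OF that] LT that(1) by auto
  obtain a' b' where a': "a = Inr (i, a')" "{x, a'} \<in> EH" "a' \<in> VH - {x. Inr (i, x) \<in> T}"
    and b': "b = Inr (i, b')" "{x, b'} \<in> EH" "b' \<in> VH - {x. Inr (i, x) \<in> T}"
    using gd[OF ab(1,3)] gd[OF ab(2,4)] by blast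
  have "(a', b') \<notin> conn_rel EH (VH - {x. Inr (i, x) \<in> T})"
    using bwd[OF il, where a=a' and b=b' and EH=EH and VH=VH and T=T and n=n] ab(5) a'(1) b'(1) by auto
  then show ?thesis using LT a' b' unfolding good_def by blast
qed


theorem theorem3p10:
  fixes VH :: "'a set" and EH :: "'a set set" and n l :: nat
  assumes "simple_graph VH EH"
    and "connected_graph VH EH"
    and "accessible (cutsets VH EH)"
    and "n \<ge> 2" and "1 \<le> l" and "l < n"
  shows "accessible (cutsets (corona_V n l VH) (corona_E n l VH EH))"
proof -
  let ?V = "corona_V n l VH" and ?E = "corona_E n l VH EH"
  have finH: "finite VH" using assms(1) unfolding simple_graph_def by auto
  have finV: "finite ?V" using finH unfolding corona_V_def by auto
  have VHne: "VH \<noteq> {}" using assms(2) unfolding connected_graph_def by auto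
  define m where "m = n - 1"
  have m: "l \<le> m" "m < n" using assms unfolding m_def by auto
  show ?thesis unfolding accessible_def
  proof (intro ballI impI)
    fix T assume Tc0: "T \<in> cutsets ?V ?E" and Tne: "T \<noteq> {}"
    have Tc: "is_cutset ?V ?E T" using Tc0 unfolding cutsets_def by auto
    have TV: "T \<subseteq> ?V" and gd: "\<forall>v\<in>T. good ?V ?E T v" using Tc cutset_char[OF finV] by auto
    have LF: "j < l \<and> (\<exists>y\<in>VH. Inr (j, y) \<notin> T)" if "Inl j \<in> T" for j
      using nec_L gd that by blast
    have Lm: "Inl m \<notin> T" using LF m by fastforce
    have RF: "Inl i \<in> T \<and> good VH EH {x. Inr (i, x) \<in> T} x" if "Inr (i, x) \<in> T" for i x
      using nec_R[of n l VH EH T i x] gd that assms(6) by auto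
    have Ril: "i < l" if "Inr (i, x) \<in> T" for i x using that TV by (auto simp: EV)
    show "\<exists>t\<in>T. T - {t} \<in> cutsets ?V ?E"
    proof (cases "\<exists>i x. Inr (i, x) \<in> T")
      case True
      then obtain i x where ix: "Inr (i, x) \<in> T" by auto
      define Ti where "Ti = {x. Inr (i, x) \<in> T}"
      have "Ti \<subseteq> VH" using TV unfolding Ti_def by (auto simp: EV)
      then have "is_cutset VH EH Ti" using RF cutset_char[OF finH] unfolding Ti_def by auto
      moreover have "Ti \<noteq> {}" using ix Ti_def by auto
      ultimately obtain t where t: "t \<in> Ti" "is_cutset VH EH (Ti - {t})"
        using assms(3) unfolding accessible_def cutsets_def by auto
      have gT: "\<forall>x\<in>Ti - {t}. good VH EH (Ti - {t}) x" using t(2) cutset_char[OF finH] by auto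
      let ?T' = "T - {Inr (i, t)}"
      have "is_cutset ?V ?E ?T'"
        unfolding cutset_char[OF finV]
      proof (intro conjI ballI)
        show "?T' \<subseteq> ?V" using TV by auto
        fix v assume v: "v \<in> ?T'"
        show "good ?V ?E ?T' v"
        proof (cases v)
          case (Inl j)
          then obtain y where "j < l" "y \<in> VH" "Inr (j, y) \<notin> T" using LF v by auto
          then show ?thesis using inl_good[of j ?T' l y VH m n EH] Inl v Lm m by auto
        next
          case (Inr q)
          then obtain j x' where jx: "v = Inr (j, x')" by (cases q) auto
          have Lj: "Inl j \<in> ?T'" using RF jx v by auto
          have jl: "j < l" using Ril jx v by auto
          have "good VH EH {x. Inr (j, x) \<in> ?T'} x'"
          proof (cases "j = i")
            case True
            then have "{x. Inr (j, x) \<in> ?T'} = Ti - {t}" unfolding Ti_def by auto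
            moreover have "x' \<in> Ti - {t}" using True jx v unfolding Ti_def by auto
            ultimately show ?thesis using gT by auto
          next
            case False
            then have "{x. Inr (j, x) \<in> ?T'} = {x. Inr (j, x) \<in> T}" by auto
            then show ?thesis using RF jx v by auto
          qed
          then show ?thesis using inr_good[OF Lj jl] jx by auto
        qed
      qed
      then show ?thesis using t(1) Ti_def by (auto simp: cutsets_def)
    next
      case False
      obtain v where v: "v \<in> T" using Tne by auto
      then obtain i where vi: "v = Inl i" using False by (cases v) auto
      obtain y where y: "y \<in> VH" using VHne by auto
      let ?T' = "T - {Inl i}"
      have "is_cutset ?V ?E ?T'"
        unfolding cutset_char[OF finV]
      proof (intro conjI ballI)
        show "?T' \<subseteq> ?V" using TV by auto
        fix w assume w: "w \<in> ?T'"
        then obtain j where wj: "w = Inl j" using False by (cases w) auto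
        have "j < l" using LF w wj by auto
        then show "good ?V ?E ?T' w" using inl_good[of j ?T' l y VH m n EH] wj w y False Lm m by auto
      qed
      then show ?thesis using v vi by (auto simp: cutsets_def)
    qed
  qed
qed

end
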